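(* Let $([n],\mathcal{I})$ be a downward-closed set system on the set of bidders $[n]$ that is not a matroid. Then MyerOPT is not RMMB: there exist distributions $F_1,\dots,F_n$, a partition $[n]=G\cup R$ with $G\neq\emptyset$, and fixed red bids $b_i\in V_i$ ($i\in R$) such that $$\mathbb{E}_{\vec b_G\sim\prod_{i\in G}F_i}\big[\mathrm{Rev}(\mathrm{MyerOPT}_{[n]}(\vec b_G,\vec b_R))\big]\;<\;\mathbb{E}_{\vec b_G\sim\prod_{i\in G}F_i}\big[\mathrm{Rev}(\mathrm{MyerOPT}_G(\vec b_G))\big].$$
   Context: Single-parameter environment: bidders $[n]$; a feasibility constraint $\mathcal{I}\subseteq 2^{[n]}$ with $\emptyset\in\mathcal{I}$ that is downward-closed (if $B\in\mathcal{I}$ and $A\subseteq B$ then $A\in\mathcal{I}$). A matroid is such a system that also satisfies the exchange axiom: if $A,B\in\mathcal{I}$ and $|A|>|B|$ then there is $x\in A\setminus B$ with $B\cup\{x\}\in\mathcal{I}$. Each bidder $i$ has a specified value distribution $F_i$ on $\mathbb{R}_{\ge0}$ with support $V_i$. The (ironed) virtual value function $\phi_i$ of $F_i$ is defined in quantile space: let $v_i(q)=\min\{v: F_i(v)\ge 1-q\}$ for $q\in[0,1]$, $R_i(q)=q\,v_i(q)$, $\overline{R_i}$ the least concave majorant of $R_i$ on $[0,1]$, and $\phi_i(v_i(q))=\overline{R_i}'(q)$ (for a regular distribution with density $f_i$ this equals $z-\frac{1-F_i(z)}{f_i(z)}$ at $z=v_i(q)$; for a point mass at $c$ it is constantly $c$).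 For $S\subseteq[n]$ and bids $b_i\in V_i$ ($i\in S$), the mechanism $\mathrm{MyerOPT}_S$ works as follows: discard bidders $i\in S$ with $\phi_i(b_i)<0$; among the sets $T\in\mathcal{I}$ with $T$ contained in the remaining bidders, select a set of winners maximizing $\sum_{i\in T}\phi_i(b_i)$ (ties broken by a fixed deterministic rule); each winner $i$ pays its critical bid, i.e. the infimum of those $z\in V_i$ such that $i$ would still be a winner if it bid $z$ with all other bids unchanged; losers pay $0$. $\mathrm{Rev}$ denotes the sum of the payments. $\mathrm{MyerOPT}$ (or $\mathrm{MyerOPT}_{[n]}$) is this mechanism run on all bidders with all specified distributions. The mechanism is RMMB (Revenue Monotone under Misspecified Bidders) for the feasibility constraint if for all distributions, all partitions $[n]=G\cup R$ with $G\ne\emptyset$ ("green" and "red" bidders), and all fixed red bids $b_i\in V_i$ ($i\in R$), the expected revenue (over $\vec b_G\sim\prod_{i\in G}F_i$) of $\mathrm{MyerOPT}_{[n]}$ on $(\vec b_G,\vec b_R)$ is at least the expected revenue of $\mathrm{MyerOPT}_G$ on $\vec b_G$. *)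

theory Defs
  imports "HOL-Probability.Probability"
begin

definition downward_closed :: "nat set \<Rightarrow> nat set set \<Rightarrow> bool" where
  "downward_closed N I \<longleftrightarrow>
     I \<subseteq> Pow N \<and> {} \<in> I \<and> (\<forall>B\<in>I. \<forall>A. A \<subseteq> B \<longrightarrow> A \<in> I)"

definition is_matroid :: "nat set \<Rightarrow> nat set set \<Rightarrow> bool" where
  "is_matroid N I \<longleftrightarrow> downward_closed N I \<and>
     (\<forall>A\<in>I. \<forall>B\<in>I. card A > card B \<longrightarrow> (\<exists>x\<in>A - B. insert x B \<in> I))"

definition valid_dist :: "real measure \<Rightarrow> bool" where
  "valid_dist F \<longleftrightarrow> prob_space F \<and> sets F = sets borel \<and> emeasure F {..<0} = 0"

definition cdf_of :: "real measure \<Rightarrow> real \<Rightarrow> real" where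
  "cdf_of F v = measure F {..v}"

definition dist_support :: "real measure \<Rightarrow> real set" where
  "dist_support F = {x. \<forall>e>0. emeasure F {x - e<..<x + e} > 0}"

definition quantile_val :: "real measure \<Rightarrow> real \<Rightarrow> real" where
  "quantile_val F q = (LEAST v. 0 \<le> v \<and> 1 - q \<le> cdf_of F v)"

definition rev_curve :: "real measure \<Rightarrow> real \<Rightarrow> real" where
  "rev_curve F q = q * quantile_val F q"

definition ironed_rev :: "real measure \<Rightarrow> real \<Rightarrow> real" where
  "ironed_rev F q = (INF g \<in> {g. concave_on {0..1} g \<and> (\<forall>x\<in>{0..1}. rev_curve F x \<le> g x)}. g q)"

definition virtual_value :: "real measure \<Rightarrow> real \<Rightarrow> real" where
  "virtual_value F v = (THE d. \<exists>q\<in>{0<..<1}. quantile_val F q = v \<and>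
                             (ironed_rev F has_real_derivative d) (at q))"

text \<open>\<open>tb\<close> is the fixed deterministic tie-breaking rule: it selects one set
  among the (nonempty) set of optimal winner sets.\<close>
definition myer_winners ::
  "nat set set \<Rightarrow> (nat \<Rightarrow> real measure) \<Rightarrow> (nat set set \<Rightarrow> nat set) \<Rightarrow> nat set
     \<Rightarrow> (nat \<Rightarrow> real) \<Rightarrow> nat set" where
  "myer_winners I F tb S b =
     (let E = {i \<in> S. 0 \<le> virtual_value (F i) (b i)};
          C = {T \<in> I. T \<subseteq> E};
          M = {T \<in> C. \<forall>T'\<in>C. (\<Sum>i\<in>T'. virtual_value (F i) (b i)) \<le> (\<Sum>i\<in>T. virtual_value (F i) (b i))}
      in tb M)"

definition myer_payment ::
  "nat set set \<Rightarrow> (nat \<Rightarrow> real measure) \<Rightarrow> (nat set set \<Rightarrow> nat set) \<Rightarrow> nat set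
     \<Rightarrow> (nat \<Rightarrow> real) \<Rightarrow> nat \<Rightarrow> real" where
  "myer_payment I F tb S b i =
     (if i \<in> myer_winners I F tb S b
      then Inf {z \<in> dist_support (F i). i \<in> myer_winners I F tb S (b(i := z))}
      else 0)"

definition myer_rev ::
  "nat set set \<Rightarrow> (nat \<Rightarrow> real measure) \<Rightarrow> (nat set set \<Rightarrow> nat set) \<Rightarrow> nat set
     \<Rightarrow> (nat \<Rightarrow> real) \<Rightarrow> real" where
  "myer_rev I F tb S b = (\<Sum>i\<in>S. myer_payment I F tb S b i)"

definition exp_rev_all ::
  "nat \<Rightarrow> nat set set \<Rightarrow> (nat \<Rightarrow> real measure) \<Rightarrow> (nat set set \<Rightarrow> nat set) \<Rightarrow> nat set
     \<Rightarrow> (nat \<Rightarrow> real) \<Rightarrow> ennreal" where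
  "exp_rev_all n I F tb G bR =
     (\<integral>\<^sup>+ bG. ennreal (myer_rev I F tb {1..n} (\<lambda>i. if i \<in> G then bG i else bR i)) \<partial>(PiM G F))"

definition exp_rev_green ::
  "nat set set \<Rightarrow> (nat \<Rightarrow> real measure) \<Rightarrow> (nat set set \<Rightarrow> nat set) \<Rightarrow> nat set \<Rightarrow> ennreal" where
  "exp_rev_green I F tb G = (\<integral>\<^sup>+ bG. ennreal (myer_rev I F tb G bG) \<partial>(PiM G F))"

end

theory Submission
  imports Defs
begin

definition D2 :: "real measure" where
  "D2 = distr (measure_pmf (bernoulli_pmf (1/4))) borel (\<lambda>b. if b then 8 else 3)"

lemma D2_meas: "(\<lambda>b::bool. if b then 8 else (3::real)) \<in> measurable (measure_pmf (bernoulli_pmf (1/4))) borel"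
  by simp

lemma prob_D2: "prob_space D2"
  unfolding D2_def by (rule prob_space.prob_space_distr[OF prob_space_measure_pmf D2_meas])

lemma sets_D2: "sets D2 = sets borel" unfolding D2_def by simp

lemma measure_D2:
  assumes "A \<in> sets borel"
  shows "measure D2 A = (if (8::real) \<in> A then 1/4 else 0) + (if (3::real) \<in> A then 3/4 else 0)"
proof -
  have "measure D2 A = measure (measure_pmf (bernoulli_pmf (1/4))) ((\<lambda>b::bool. if b then 8 else (3::real)) -` A \<inter> UNIV)"
    unfolding D2_def using assms by (subst measure_distr[OF D2_meas]) auto
  also have "\<dots> = sum (pmf (bernoulli_pmf (1/4))) ((\<lambda>b::bool. if b then 8 else (3::real)) -` A)"
    by (subst measure_measure_pmf_finite) auto
  also have "\<dots> = (if (8::real) \<in> A then 1/4 else 0) + (if (3::real) \<in> A then 3/4 else 0)"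
  proof -
    have e: "((\<lambda>b::bool. if b then 8 else (3::real)) -` A) =
       (if (8::real) \<in> A then {True} else {}) \<union> (if (3::real) \<in> A then {False} else {})"
      by (auto split: if_splits)
    show ?thesis unfolding e by (auto simp: sum.union_disjoint)
  qed
  finally show ?thesis .
qed

lemma emeasure_D2:
  assumes "A \<in> sets borel"
  shows "emeasure D2 A = ennreal ((if (8::real) \<in> A then 1/4 else 0) + (if (3::real) \<in> A then 3/4 else 0))"
proof -
  interpret prob_space D2 by (rule prob_D2)
  show ?thesis using assms sets_D2 by (simp add: emeasure_eq_measure measure_D2)
qed

lemma valid_D2: "valid_dist D2"
  unfolding valid_dist_def using prob_D2 sets_D2 by (simp add: emeasure_D2)

lemma cdf_D2: "cdf_of D2 v = (if 8 \<le> v then 1/4 else 0) + (if 3 \<le> v then 3/4 else 0)"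
  unfolding cdf_of_def by (simp add: measure_D2)

lemma supp_D2_pos: "(3::real) \<in> dist_support D2" "(8::real) \<in> dist_support D2"
  unfolding dist_support_def by (auto simp: emeasure_D2 intro: add_pos_nonneg)

lemma supp_D2_sub: "dist_support D2 \<subseteq> {0..}"
proof
  fix x assume x: "x \<in> dist_support D2"
  show "x \<in> {0..}"
  proof (rule ccontr)
    assume "x \<notin> {0..}"
    then have "x < 0" by auto
    then have "emeasure D2 {x - (-x)<..<x + (-x)} = 0" by (simp add: emeasure_D2)
    moreover have "emeasure D2 {x - (-x)<..<x + (-x)} > 0"
    proof -
      from x have h: "\<forall>e>0. 0 < emeasure D2 {x - e<..<x + e}" by (simp add: dist_support_def)
      show ?thesis using h[rule_format, of "-x"] \<open>x<0\<close> by linarith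
    qed
    ultimately show False by simp
  qed
qed

lemma valid_pm: "0 \<le> c \<Longrightarrow> valid_dist (return borel c)"
  unfolding valid_dist_def by (auto simp: prob_space_return)

lemma cdf_pm: "cdf_of (return borel c) v = (if c \<le> v then 1 else 0)"
  unfolding cdf_of_def by (simp add: measure_return)

lemma supp_pm: "dist_support (return borel c) = {c}"
proof -
  have "x = c" if "\<forall>e>0. 0 < emeasure (return borel c) {x - e<..<x + e}" for x
  proof (rule ccontr)
    assume "x \<noteq> c"
    then have "0 < \<bar>x - c\<bar>" by auto
    with that have "0 < emeasure (return borel c) {x - \<bar>x - c\<bar><..<x + \<bar>x - c\<bar>}" by blast
    then show False by (auto simp: emeasure_return split: split_indicator abs_split)
  qed
  then show ?thesis unfolding dist_support_def by (auto simp: emeasure_return)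
qed

lemma quantile_pm: "0 \<le> c \<Longrightarrow> 0 \<le> q \<Longrightarrow> q < 1 \<Longrightarrow> quantile_val (return borel c) q = c"
  unfolding quantile_val_def cdf_pm
  by (rule Least_equality) (auto split: if_splits)

lemma quantile_D2_hi: "0 \<le> q \<Longrightarrow> q < 1/4 \<Longrightarrow> quantile_val D2 q = 8"
  unfolding quantile_val_def cdf_D2
  by (rule Least_equality) (auto split: if_splits)

lemma quantile_D2_lo: "1/4 \<le> q \<Longrightarrow> q < 1 \<Longrightarrow> quantile_val D2 q = 3"
  unfolding quantile_val_def cdf_D2
  by (rule Least_equality) (auto split: if_splits)

lemma quantile_one: "quantile_val F 1 = 0"
  unfolding quantile_val_def cdf_of_def
  by (rule Least_equality) auto

lemma ironed_char:
  assumes gzc: "concave_on {0..1} gz" and gzm: "\<forall>x\<in>{0..1}. rev_curve F x \<le> gz x"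
  and low: "\<And>g. concave_on {0..1} g \<Longrightarrow> (\<forall>x\<in>{0..1}. rev_curve F x \<le> g x) \<Longrightarrow> gz q \<le> g q"
  shows "ironed_rev F q = gz q"
proof -
  let ?S = "{g. concave_on {0..1} g \<and> (\<forall>x\<in>{0..1}. rev_curve F x \<le> g x)}"
  have gzS: "gz \<in> ?S" using gzc gzm by simp
  have bdd: "bdd_below ((\<lambda>g. g q) ` ?S)" using low by (intro bdd_belowI2[of _ "gz q"]) auto
  have "(INF g\<in>?S. g q) \<le> gz q" by (rule cINF_lower[OF bdd gzS])
  moreover have "gz q \<le> (INF g\<in>?S. g q)" using gzS low by (intro cINF_greatest) auto
  ultimately show ?thesis unfolding ironed_rev_def by simp
qed

lemma ironed_pm:
  assumes c: "0 \<le> c" and q: "0 \<le> q" "q < 1"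
  shows "ironed_rev (return borel c) q = c * q"
proof (rule ironed_char[where gz = "\<lambda>q. c * q"])
  show "concave_on {0..1} (\<lambda>q. c * q)"
    by (simp add: concave_on_iff algebra_simps)
  show "\<forall>x\<in>{0..1}. rev_curve (return borel c) x \<le> c * x"
  proof
    fix x :: real assume x: "x \<in> {0..1}"
    show "rev_curve (return borel c) x \<le> c * x"
    proof (cases "x = 1")
      case True then show ?thesis using c by (simp add: rev_curve_def quantile_one)
    next
      case False then show ?thesis using x c by (simp add: rev_curve_def quantile_pm)
    qed
  qed
  fix g assume "\<forall>x\<in>{0..1}. rev_curve (return borel c) x \<le> g x"
  then have "rev_curve (return borel c) q \<le> g q" using q by auto
  then show "c * q \<le> g q" using q c by (simp add: rev_curve_def quantile_pm mult.commute)
qed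

definition g2 :: "real \<Rightarrow> real" where "g2 q = min (8 * q) ((4 * q + 5) / 3)"

lemma g2_concave: "concave_on {0..1} g2"
  unfolding concave_on_iff
proof (intro conjI ballI allI impI)
  show "convex {0..1::real}" by (rule convex_real_interval)
  fix x y u v :: real assume "u \<ge> 0" "v \<ge> 0" "u + v = 1"
  have g1: "\<And>z. g2 z \<le> 8 * z" unfolding g2_def by (rule min.cobounded1)
  have g2': "\<And>z. g2 z \<le> (4*z+5)/3" unfolding g2_def by (rule min.cobounded2)
  have a: "u * g2 x + v * g2 y \<le> u * (8*x) + v * (8*y)"
    using \<open>u \<ge> 0\<close> \<open>v \<ge> 0\<close> by (intro add_mono mult_left_mono g1) auto
  have b: "u * g2 x + v * g2 y \<le> u * ((4*x+5)/3) + v * ((4*y+5)/3)"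
    using \<open>u \<ge> 0\<close> \<open>v \<ge> 0\<close> by (intro add_mono mult_left_mono g2') auto
  have e1: "u * (8*x) + v * (8*y) = 8 * (u *\<^sub>R x + v *\<^sub>R y)" by (simp add: algebra_simps)
  have e2: "u * ((4*x+5)/3) + v * ((4*y+5)/3) = (4 * (u *\<^sub>R x + v *\<^sub>R y) + 5) / 3"
    using \<open>u + v = 1\<close> by (simp add: field_simps)
  show "u * g2 x + v * g2 y \<le> g2 (u *\<^sub>R x + v *\<^sub>R y)"
    using a b unfolding e1 e2 g2_def by (rule min.boundedI)
qed

lemma rev_D2_hi: "0 \<le> q \<Longrightarrow> q < 1/4 \<Longrightarrow> rev_curve D2 q = 8 * q"
  by (simp add: rev_curve_def quantile_D2_hi)

lemma rev_D2_lo: "1/4 \<le> q \<Longrightarrow> q < 1 \<Longrightarrow> rev_curve D2 q = 3 * q"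
  by (simp add: rev_curve_def quantile_D2_lo)

lemma g2_maj: "\<forall>x\<in>{0..1}. rev_curve D2 x \<le> g2 x"
proof
  fix x :: real assume x: "x \<in> {0..1}"
  consider "x < 1/4" | "1/4 \<le> x" "x < 1" | "x = 1" using x by force
  then show "rev_curve D2 x \<le> g2 x"
  proof cases
    case 1 then show ?thesis using x by (simp add: rev_D2_hi g2_def)
  next
    case 2 then show ?thesis using x by (simp add: rev_D2_lo g2_def)
  next
    case 3 then show ?thesis by (simp add: rev_curve_def quantile_one g2_def)
  qed
qed

lemma g2_low:
  assumes gc: "concave_on {0..1} g" and gm: "\<forall>x\<in>{0..1}. rev_curve D2 x \<le> g x"
    and q: "0 \<le> q" "q < 1"
  shows "g2 q \<le> g q"
proof (cases "q < 1/4")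
  case True
  then have "rev_curve D2 q \<le> g q" using gm q by auto
  then show ?thesis using True q by (simp add: rev_D2_hi g2_def)
next
  case False
  then have q4: "1/4 \<le> q" by simp
  define R where "R = (\<lambda>t::real. (4/3) * ((1 - t - q) * (8 * (1/4 - t)) + (q - 1/4 + t) * (3 * (1 - t))))"
  have ev: "eventually (\<lambda>t. R t \<le> g q) (at_right 0)"
  proof -
    have "\<forall>t. 0 < t \<longrightarrow> t < min (1/4) (1 - q) \<longrightarrow> R t \<le> g q"
    proof (intro allI impI)
      fix t :: real assume t: "0 < t" "t < min (1/4) (1 - q)"
      define a where "a = 1/4 - t"
      define b where "b = 1 - t"
      define v where "v = (q - a) / (3/4)"
      have v01: "0 \<le> v" "v \<le> 1" using t q4 q unfolding v_def a_def by auto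
      have mix: "(1 - v) *\<^sub>R a + v *\<^sub>R b = q" unfolding v_def a_def b_def by (simp add: field_simps)
      have ab: "a \<in> {0..1}" "b \<in> {0..1}" using t q unfolding a_def b_def by auto
      have "g ((1 - v) *\<^sub>R a + v *\<^sub>R b) \<ge> (1 - v) * g a + v * g b"
        by (rule concave_onD[OF gc v01 ab])
      then have gq: "g q \<ge> (1 - v) * g a + v * g b" using mix by simp
      have "rev_curve D2 a \<le> g a" using gm ab by auto
      moreover have "rev_curve D2 a = 8 * a" using t unfolding a_def by (intro rev_D2_hi) auto
      ultimately have ga: "g a \<ge> 8 * a" by simp
      have "rev_curve D2 b \<le> g b" using gm ab by auto
      moreover have "rev_curve D2 b = 3 * b" using t unfolding b_def by (intro rev_D2_lo) auto
      ultimately have gb: "g b \<ge> 3 * b" by simp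
      have "(1 - v) * (8 * a) + v * (3 * b) \<le> (1 - v) * g a + v * g b"
        using ga gb v01 by (intro add_mono mult_left_mono) auto
      moreover have "R t = (1 - v) * (8 * a) + v * (3 * b)"
        unfolding R_def v_def a_def b_def by (simp add: field_simps)
      ultimately show "R t \<le> g q" using gq by linarith
    qed
    moreover have "min (1/4) (1 - q) > (0::real)" using q by simp
    ultimately show ?thesis unfolding eventually_at_right_field by blast
  qed
  have lim: "(R \<longlongrightarrow> R 0) (at_right 0)" unfolding R_def
    by (intro tendsto_intros)
  have "R 0 \<le> g q"
    by (rule tendsto_le[OF trivial_limit_at_right_real tendsto_const lim ev])
  moreover have "R 0 = (4 * q + 5) / 3" unfolding R_def by (simp add: field_simps)
  ultimately have "(4 * q + 5) / 3 \<le> g q" by simp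
  then show ?thesis unfolding g2_def by (rule min.coboundedI2)
qed

lemma ironed_D2: "0 \<le> q \<Longrightarrow> q < 1 \<Longrightarrow> ironed_rev D2 q = g2 q"
  by (rule ironed_char[OF g2_concave g2_maj g2_low])

lemma deriv_agree:
  assumes "open S" "q \<in> S" "\<And>x. x \<in> S \<Longrightarrow> h x = f x" "(h has_real_derivative D) (at q)"
    "(f has_real_derivative d) (at q)"
  shows "d = D"
proof -
  have "(f has_real_derivative D) (at q)"
    by (rule has_field_derivative_transform_within_open[OF assms(4,1,2)]) (use assms(3) in auto)
  then show ?thesis using assms(5) DERIV_unique by blast
qed

lemma deriv_from:
  assumes "open S" "q \<in> S" "\<And>x. x \<in> S \<Longrightarrow> h x = f x" "(h has_real_derivative D) (at q)"
  shows "(f has_real_derivative D) (at q)"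
  by (rule has_field_derivative_transform_within_open[OF assms(4,1,2)]) (use assms(3) in auto)

lemma vv_pm:
  assumes c: "0 \<le> c"
  shows "virtual_value (return borel c) c = c"
  unfolding virtual_value_def
proof (rule the_equality)
  have S: "\<And>x. x \<in> {0<..<1} \<Longrightarrow> c * x = ironed_rev (return borel c) x"
    using ironed_pm[OF c] by auto
  have D: "\<And>q. ((\<lambda>x. c * x) has_real_derivative c) (at q)"
    by (auto intro!: derivative_eq_intros)
  show "\<exists>q\<in>{0<..<1}. quantile_val (return borel c) q = c \<and> (ironed_rev (return borel c) has_real_derivative c) (at q)"
    by (rule bexI[of _ "1/2"], rule conjI, simp add: quantile_pm c,
        rule deriv_from[OF open_greaterThanLessThan _ S D]) auto
  fix d assume "\<exists>q\<in>{0<..<1}. quantile_val (return borel c) q = c \<and> (ironed_rev (return borel c) has_real_derivative d) (at q)"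
  then obtain q where q: "q \<in> {0<..<1}" "(ironed_rev (return borel c) has_real_derivative d) (at q)" by blast
  show "d = c" by (rule deriv_agree[OF open_greaterThanLessThan q(1) S D q(2)])
qed

lemma g2_hi: "0 \<le> x \<Longrightarrow> x \<le> 1/4 \<Longrightarrow> g2 x = 8 * x"
  unfolding g2_def by simp

lemma g2_lo: "1/4 \<le> x \<Longrightarrow> g2 x = (4 * x + 5) / 3"
  unfolding g2_def by simp

lemma vv_D2_8: "virtual_value D2 8 = 8"
  unfolding virtual_value_def
proof (rule the_equality)
  have S: "\<And>x. x \<in> {0<..<1/4} \<Longrightarrow> 8 * x = ironed_rev D2 x"
    using ironed_D2 g2_hi by auto
  have D: "\<And>q. ((\<lambda>x. 8 * x) has_real_derivative 8) (at q)"
    by (auto intro!: derivative_eq_intros)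
  show "\<exists>q\<in>{0<..<1}. quantile_val D2 q = 8 \<and> (ironed_rev D2 has_real_derivative 8) (at q)"
    by (rule bexI[of _ "1/8"], rule conjI, simp add: quantile_D2_hi,
        rule deriv_from[OF open_greaterThanLessThan[of 0 "1/4"] _ S D]) auto
  fix d assume "\<exists>q\<in>{0<..<1}. quantile_val D2 q = 8 \<and> (ironed_rev D2 has_real_derivative d) (at q)"
  then obtain q where q: "q \<in> {0<..<1}" "quantile_val D2 q = 8" "(ironed_rev D2 has_real_derivative d) (at q)" by blast
  have "q < 1/4"
  proof (rule ccontr)
    assume "\<not> q < 1/4"
    then have "quantile_val D2 q = 3" using q(1) by (intro quantile_D2_lo) auto
    then show False using q(2) by simp
  qed
  then have "q \<in> {0<..<1/4}" using q(1) by auto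
  then show "d = 8" by (rule deriv_agree[OF open_greaterThanLessThan _ S D q(3)])
qed

lemma no_deriv_kink:
  assumes "(ironed_rev D2 has_real_derivative d) (at (1/4))"
  shows False
proof -
  let ?Q = "\<lambda>y. (ironed_rev D2 y - ironed_rev D2 (1/4)) / (y - 1/4)"
  have lim: "(?Q \<longlongrightarrow> d) (at (1/4))" using assms by (simp add: has_field_derivative_iff)
  have l: "(?Q \<longlongrightarrow> d) (at_left (1/4))" and r: "(?Q \<longlongrightarrow> d) (at_right (1/4))"
    using lim filterlim_at_split by blast+
  have v14: "ironed_rev D2 (1/4) = 2" using ironed_D2[of "1/4"] g2_hi[of "1/4"] by simp
  have el: "eventually (\<lambda>y. ?Q y = 8) (at_left (1/4))"
    unfolding eventually_at_left_field
  proof (rule exI[of _ 0], intro conjI allI impI)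
    fix y :: real assume "0 < y" "y < 1/4"
    then show "?Q y = 8" using ironed_D2[of y] g2_hi[of y] v14 by (simp add: field_simps)
  qed simp
  have er: "eventually (\<lambda>y. ?Q y = 4/3) (at_right (1/4))"
    unfolding eventually_at_right_field
  proof (rule exI[of _ 1], intro conjI allI impI)
    fix y :: real assume "1/4 < y" "y < 1"
    then show "?Q y = 4/3" using ironed_D2[of y] g2_lo[of y] v14 by (simp add: field_simps)
  qed simp
  have "(?Q \<longlongrightarrow> 8) (at_left (1/4))" by (rule Lim_transform_eventually[OF tendsto_const]) (use el in \<open>auto elim: eventually_mono\<close>)
  with l have "d = 8" using tendsto_unique trivial_limit_at_left_real by blast
  have "(?Q \<longlongrightarrow> 4/3) (at_right (1/4))" by (rule Lim_transform_eventually[OF tendsto_const]) (use er in \<open>auto elim: eventually_mono\<close>)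
  with r have "d = 4/3" using tendsto_unique trivial_limit_at_right_real by blast
  with \<open>d = 8\<close> show False by simp
qed

lemma vv_D2_3: "virtual_value D2 3 = 4/3"
  unfolding virtual_value_def
proof (rule the_equality)
  have S: "\<And>x. x \<in> {1/4<..<1} \<Longrightarrow> (4 * x + 5) / 3 = ironed_rev D2 x"
    using ironed_D2 g2_lo by auto
  have D: "\<And>q. ((\<lambda>x. (4 * x + 5) / 3) has_real_derivative 4/3) (at q)"
    by (auto intro!: derivative_eq_intros)
  show "\<exists>q\<in>{0<..<1}. quantile_val D2 q = 3 \<and> (ironed_rev D2 has_real_derivative 4/3) (at q)"
    by (rule bexI[of _ "1/2"], rule conjI, simp add: quantile_D2_lo,
        rule deriv_from[OF open_greaterThanLessThan[of "1/4" 1] _ S D]) auto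
  fix d assume "\<exists>q\<in>{0<..<1}. quantile_val D2 q = 3 \<and> (ironed_rev D2 has_real_derivative d) (at q)"
  then obtain q where q: "q \<in> {0<..<1}" "quantile_val D2 q = 3" "(ironed_rev D2 has_real_derivative d) (at q)" by blast
  have "q \<ge> 1/4"
  proof (rule ccontr)
    assume "\<not> q \<ge> 1/4"
    then have "quantile_val D2 q = 8" using q(1) by (intro quantile_D2_hi) auto
    then show False using q(2) by simp
  qed
  moreover have "q \<noteq> 1/4" using no_deriv_kink q(3) by blast
  ultimately have "q \<in> {1/4<..<1}" using q(1) by auto
  then show "d = 4/3" by (rule deriv_agree[OF open_greaterThanLessThan _ S D q(3)])
qed

lemma dc_sub: "downward_closed N I \<Longrightarrow> B \<in> I \<Longrightarrow> A \<subseteq> B \<Longrightarrow> A \<in> I"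
  unfolding downward_closed_def by blast

lemma exch_core:
  assumes dc: "downward_closed {1..n} I"
  shows "\<And>A B. card (B - A) = k \<Longrightarrow> A \<in> I \<Longrightarrow> B \<in> I \<Longrightarrow> card A > card B \<Longrightarrow>
     (\<forall>x\<in>A - B. insert x B \<notin> I) \<Longrightarrow>
     \<exists>C b x y. b \<notin> C \<and> x \<notin> insert b C \<and> y \<notin> insert b C \<and> x \<noteq> y \<and>
        insert b C \<in> I \<and> insert x (insert y C) \<in> I \<and>
        insert x (insert b C) \<notin> I \<and> insert y (insert b C) \<notin> I"
proof (induction k rule: less_induct)
  case (less k A B)
  have fin: "\<And>X. X \<in> I \<Longrightarrow> finite X" using dc unfolding downward_closed_def
    by (meson PowD finite_atLeastAtMost finite_subset subsetD)
  have fA: "finite A" and fB: "finite B" using fin less.prems by auto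
  show ?case
  proof (cases "B - A = {}")
    case True
    then have "B \<subseteq> A" by auto
    have "A - B \<noteq> {}"
    proof
      assume "A - B = {}"
      then have "A \<subseteq> B" by auto
      then have "card A \<le> card B" using card_mono[OF fB] by blast
      then show False using less.prems(4) by simp
    qed
    then obtain x where x: "x \<in> A - B" by auto
    then have "insert x B \<subseteq> A" using \<open>B \<subseteq> A\<close> by auto
    then have "insert x B \<in> I" using dc_sub[OF dc less.prems(2)] by blast
    with x less.prems(5) show ?thesis by blast
  next
    case False
    then obtain b where b: "b \<in> B" "b \<notin> A" by auto
    define B' where "B' = B - {b}"
    have B'I: "B' \<in> I" using dc_sub[OF dc less.prems(3)] B'_def by blast
    have cB': "card B' < card B" unfolding B'_def by (rule card_Diff1_less[OF fB b(1)])
    have "B' - A = (B - A) - {b}" by (auto simp: B'_def)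
    moreover have "card (B - A - {b}) < card (B - A)"
      by (rule card_Diff1_less) (use b fB in auto)
    ultimately have kB': "card (B' - A) < k" using less.prems(1) by simp
    show ?thesis
    proof (cases "\<forall>x\<in>A - B. insert x B' \<notin> I")
      case True
      have "A - B' = A - B" using b B'_def by auto
      then have f': "\<forall>x\<in>A - B'. insert x B' \<notin> I" using True by simp
      have c': "card B' < card A" using cB' less.prems(4) by simp
      show ?thesis by (rule less.IH[OF kB' refl less.prems(2) B'I c' f'])
    next
      case False
      then obtain x where x: "x \<in> A - B" "insert x B' \<in> I" by auto
      define B'' where "B'' = insert x B'"
      have "x \<notin> B'" using x by (auto simp: B'_def)
      then have "card B'' = Suc (card B')" using fB by (simp add: B''_def B'_def)
      moreover have "Suc (card B') = card B" unfolding B'_def by (rule card_Suc_Diff1[OF fB b(1)])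
      ultimately have cB'': "card B'' = card B" by simp
      have "B'' - A = B' - A" using x by (auto simp: B''_def)
      then have kB'': "card (B'' - A) < k" using kB' by simp
      show ?thesis
      proof (cases "\<forall>y\<in>A - B''. insert y B'' \<notin> I")
        case True
        have B''I: "B'' \<in> I" using x(2) by (simp add: B''_def)
        have c'': "card B'' < card A" using cB'' less.prems(4) by simp
        show ?thesis by (rule less.IH[OF kB'' refl less.prems(2) B''I c'' True])
      next
        case False
        then obtain y where y: "y \<in> A - B''" "insert y B'' \<in> I" by auto
        have B: "B = insert b B'" using b(1) unfolding B'_def by blast
        have yB: "y \<notin> B" using y(1) b(2) unfolding B''_def B'_def by blast
        have c1: "b \<notin> B'" "x \<notin> insert b B'" "y \<notin> insert b B'" "x \<noteq> y"
          using x(1) y(1) yB b(2) unfolding B'_def B''_def by blast+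
        have e: "insert x (insert y B') = insert y B''" unfolding B''_def by blast
        have c2: "insert b B' \<in> I" "insert x (insert y B') \<in> I"
          using less.prems(3) B y(2) e by simp_all
        have c3: "insert x (insert b B') \<notin> I" "insert y (insert b B') \<notin> I"
          using less.prems(5) x(1) y(1) yB B by auto
        show ?thesis using c1 c2 c3 by blast
      qed
    qed
  qed
qed

lemma nonmatroid_struct:
  assumes dc: "downward_closed {1..n} I" and nm: "\<not> is_matroid {1..n} I"
  shows "\<exists>C b x y. b \<notin> C \<and> x \<notin> insert b C \<and> y \<notin> insert b C \<and> x \<noteq> y \<and>
        insert b C \<in> I \<and> insert x (insert y C) \<in> I \<and>
        insert x (insert b C) \<notin> I \<and> insert y (insert b C) \<notin> I"
proof -
  from nm dc obtain A B where "A \<in> I" "B \<in> I" "card A > card B" "\<forall>x\<in>A - B. insert x B \<notin> I"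
    unfolding is_matroid_def by blast
  then show ?thesis using exch_core[OF dc refl] by blast
qed

lemma int_point:
  fixes c :: "'a \<Rightarrow> real" and F :: "'a \<Rightarrow> real measure" and f :: "('a \<Rightarrow> real) \<Rightarrow> ennreal"
  assumes fin: "finite G" and FG: "\<And>i. i \<in> G \<Longrightarrow> F i = return borel (c i)"
  shows "(\<integral>\<^sup>+ bG. f bG \<partial>PiM G F) = f (restrict c G)"
proof -
  let ?M = "PiM G (\<lambda>_. borel :: real measure)"
  let ?x = "restrict c G"
  have "PiM G F = PiM G (\<lambda>i. return borel (c i))" by (rule PiM_cong) (use FG in auto)
  also have "\<dots> = return ?M ?x" by (rule PiM_return[OF fin]) auto
  finally have P: "PiM G F = return ?M ?x" .
  have xsp: "?x \<in> space ?M" by (simp add: space_PiM)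
  have single: "PiE G (\<lambda>i. {c i}) = {?x}"
    by (auto simp: PiE_def extensional_def restrict_def fun_eq_iff Pi_def)
  have sx: "{?x} \<in> sets ?M" unfolding single[symmetric] by (rule sets_PiM_I_finite[OF fin]) auto
  have N: "space ?M - {?x} \<in> null_sets (return ?M ?x)"
    using sx by (auto simp: null_sets_def)
  have AE: "AE y in return ?M ?x. f y = f ?x"
    by (rule AE_I'[OF N]) auto
  interpret prob_space "return ?M ?x" by (rule prob_space_return[OF xsp])
  have "(\<integral>\<^sup>+ bG. f bG \<partial>PiM G F) = (\<integral>\<^sup>+ bG. f ?x \<partial>return ?M ?x)"
    unfolding P by (rule nn_integral_cong_AE[OF AE])
  also have "\<dots> = f ?x" using emeasure_space_1 by simp
  finally show ?thesis .
qed

lemma argmax_exists: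
  fixes f :: "'a \<Rightarrow> real"
  assumes "finite K" "K \<noteq> {}"
  shows "\<exists>T\<in>K. \<forall>T'\<in>K. f T' \<le> f T"
proof -
  have "Max (f ` K) \<in> f ` K" using assms by (intro Max_in) auto
  then obtain T where "T \<in> K" "f T = Max (f ` K)" by auto
  then show ?thesis using assms by (intro bexI[of _ T]) auto
qed

lemma winners_char:
  assumes tbP: "\<forall>X. X \<noteq> {} \<longrightarrow> tb X \<in> X" and fin: "finite I" and e: "{} \<in> I"
  shows "myer_winners I F tb S b \<in> I \<and> myer_winners I F tb S b \<subseteq> {i\<in>S. 0 \<le> virtual_value (F i) (b i)} \<and>
     (\<forall>T'\<in>I. T' \<subseteq> {i\<in>S. 0 \<le> virtual_value (F i) (b i)} \<longrightarrow>
        (\<Sum>i\<in>T'. virtual_value (F i) (b i)) \<le> (\<Sum>i\<in>myer_winners I F tb S b. virtual_value (F i) (b i)))"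
proof -
  define E where "E = {i\<in>S. 0 \<le> virtual_value (F i) (b i)}"
  define Cd where "Cd = {T \<in> I. T \<subseteq> E}"
  define M where "M = {T \<in> Cd. \<forall>T'\<in>Cd. (\<Sum>i\<in>T'. virtual_value (F i) (b i)) \<le> (\<Sum>i\<in>T. virtual_value (F i) (b i))}"
  have W: "myer_winners I F tb S b = tb M" unfolding myer_winners_def Let_def E_def Cd_def M_def by simp
  have "finite Cd" "Cd \<noteq> {}" using fin e unfolding Cd_def by auto
  then have "M \<noteq> {}" unfolding M_def using argmax_exists[of Cd "\<lambda>T. (\<Sum>i\<in>T. virtual_value (F i) (b i))"] by auto
  then have "tb M \<in> M" using tbP by auto
  then show ?thesis unfolding W M_def Cd_def E_def by auto
qed

locale nmloc =
  fixes n :: nat and I :: "nat set set" and tb :: "nat set set \<Rightarrow> nat set" and C :: "nat set" and b x y :: nat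
  assumes dc: "downward_closed {1..n} I" and tbP: "\<forall>X. X \<noteq> {} \<longrightarrow> tb X \<in> X"
  and bC: "b \<notin> C" and xB: "x \<notin> insert b C" and yB: "y \<notin> insert b C" and xy: "x \<noteq> y"
  and BI: "insert b C \<in> I" and AI: "insert x (insert y C) \<in> I"
  and xBI: "insert x (insert b C) \<notin> I" and yBI: "insert y (insert b C) \<notin> I"
begin

definition "Bs = insert b C"
definition "cc i = (if i \<in> Bs then 7 else 0 :: real)"
definition "FF i = (if i = x \<or> i = y then D2 else return borel (cc i))"
definition "GG = {1..n} - {x, y}"
definition "ba i = (if i \<in> GG then cc i else 8 :: real)"

lemma Ipow: "I \<subseteq> Pow {1..n}" "{} \<in> I" using dc unfolding downward_closed_def by auto

lemma down: "T \<in> I \<Longrightarrow> U \<subseteq> T \<Longrightarrow> U \<in> I" using dc unfolding downward_closed_def by blast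

lemma finI: "finite I" using Ipow(1) finite_subset by (metis finite_Pow_iff finite_atLeastAtMost)

lemma subT: "T \<in> I \<Longrightarrow> T \<subseteq> {1..n}" using Ipow by auto

lemma finT: "T \<in> I \<Longrightarrow> finite T" using subT finite_subset by blast

lemma rng: "Bs \<subseteq> {1..n}" "x \<in> {1..n}" "y \<in> {1..n}" "finite C" "finite Bs"
  using subT[OF BI] subT[OF AI] finT[OF BI] unfolding Bs_def by auto

lemma xyBs: "x \<notin> Bs" "y \<notin> Bs" using xB yB unfolding Bs_def by auto

lemma cardBs: "card Bs = Suc (card C)" using bC rng(4) unfolding Bs_def by simp

lemma BsG: "Bs \<subseteq> GG" using rng xyBs unfolding GG_def by auto

lemma cc_nn: "0 \<le> cc i" unfolding cc_def by simp

lemma FF_G: "i \<in> GG \<Longrightarrow> FF i = return borel (cc i)" unfolding FF_def GG_def by auto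

lemma FF_x: "FF x = D2" and FF_y: "FF y = D2" unfolding FF_def by auto

lemma xT: assumes "T \<in> I" "x \<in> T" shows "card (T \<inter> Bs) \<le> card C"
proof -
  have "\<not> Bs \<subseteq> T"
  proof
    assume "Bs \<subseteq> T"
    then have "insert x Bs \<subseteq> T" using assms by auto
    then have "insert x Bs \<in> I" using down assms by blast
    then show False using xBI unfolding Bs_def by simp
  qed
  then have "T \<inter> Bs \<subset> Bs" by auto
  then have "card (T \<inter> Bs) < card Bs" using rng(5) by (rule psubset_card_mono[rotated])
  then show ?thesis using cardBs by simp
qed

lemma yT: assumes "T \<in> I" "y \<in> T" shows "card (T \<inter> Bs) \<le> card C"
proof -
  have "\<not> Bs \<subseteq> T"
  proof
    assume "Bs \<subseteq> T"
    then have "insert y Bs \<subseteq> T" using assms by auto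
    then have "insert y Bs \<in> I" using down assms by blast
    then show False using yBI unfolding Bs_def by simp
  qed
  then have "T \<inter> Bs \<subset> Bs" by auto
  then have "card (T \<inter> Bs) < card Bs" using rng(5) by (rule psubset_card_mono[rotated])
  then show ?thesis using cardBs by simp
qed

lemma cardTB: "card (T \<inter> Bs) \<le> Suc (card C)"
  using card_mono[OF rng(5), of "T \<inter> Bs"] cardBs by simp

lemma sum_ind: "finite T \<Longrightarrow> (\<Sum>i\<in>T. if i \<in> A then (7::real) else 0) = 7 * card (T \<inter> A)"
  by (simp add: sum.inter_restrict[symmetric])

lemma all_winners:
  fixes bb :: "nat \<Rightarrow> real"
  assumes bx: "bb x = 8 \<or> bb x = 3" and bby: "bb y = 8 \<or> bb y = 3" and b8: "bb x = 8 \<or> bb y = 8"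
    and bG: "\<forall>i\<in>GG. bb i = cc i"
  shows "x \<in> myer_winners I FF tb {1..n} bb \<and> y \<in> myer_winners I FF tb {1..n} bb \<and>
         card (myer_winners I FF tb {1..n} bb \<inter> Bs) \<le> card C"
proof -
  define W where "W = myer_winners I FF tb {1..n} bb"
  define phi where "phi = (\<lambda>i. virtual_value (FF i) (bb i))"
  define wx where "wx = phi x"
  define wy where "wy = phi y"
  have wx: "wx = 8 \<or> wx = 4/3" using bx unfolding wx_def phi_def FF_x by (auto simp: vv_D2_8 vv_D2_3)
  have wy: "wy = 8 \<or> wy = 4/3" using bby unfolding wy_def phi_def FF_y by (auto simp: vv_D2_8 vv_D2_3)
  have wxy: "wx > 0" "wy > 0" "wx + wy > 7"
    using wx wy b8 bx by (auto simp: wx_def wy_def phi_def FF_x FF_y vv_D2_8 vv_D2_3)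
  have phiG: "phi i = cc i" if "i \<in> GG" for i
    using that bG vv_pm[OF cc_nn] by (simp add: phi_def FF_G)
  have phi_eq: "phi i = (if i \<in> Bs then 7 else 0) + (if i = x then wx else 0) + (if i = y then wy else 0)"
    if iin: "i \<in> {1..n}" for i
  proof -
    consider "i = x" | "i = y" | "i \<in> GG" using iin unfolding GG_def by auto
    then show ?thesis
    proof cases
      case 1 then show ?thesis using xyBs xy by (simp add: wx_def)
    next
      case 2 then show ?thesis using xyBs xy by (simp add: wy_def)
    next
      case 3 then have "i \<noteq> x" "i \<noteq> y" unfolding GG_def by auto
      then show ?thesis using phiG[OF 3] by (simp add: cc_def)
    qed
  qed
  have E: "{i\<in>{1..n}. 0 \<le> phi i} = {1..n}"
    using phi_eq wxy by fastforce
  have sumT: "(\<Sum>i\<in>T. phi i) = 7 * card (T \<inter> Bs) + (if x \<in> T then wx else 0) + (if y \<in> T then wy else 0)"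
    if "T \<subseteq> {1..n}" for T
  proof -
    have fT: "finite T" using that finite_subset by blast
    have "(\<Sum>i\<in>T. phi i) = (\<Sum>i\<in>T. (if i \<in> Bs then 7 else 0) + (if i = x then wx else 0) + (if i = y then wy else 0))"
      using that phi_eq by (intro sum.cong) auto
    also have "\<dots> = 7 * card (T \<inter> Bs) + (if x \<in> T then wx else 0) + (if y \<in> T then wy else 0)"
      using fT by (simp add: sum.distrib sum_ind sum.delta)
    finally show ?thesis .
  qed
  have wc: "W \<in> I \<and> W \<subseteq> {i\<in>{1..n}. 0 \<le> phi i} \<and>
     (\<forall>T'\<in>I. T' \<subseteq> {i\<in>{1..n}. 0 \<le> phi i} \<longrightarrow> sum phi T' \<le> sum phi W)"
    using winners_char[OF tbP finI Ipow(2), of FF "{1..n}" bb] unfolding W_def phi_def by simp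
  then have WI: "W \<in> I" and Wn: "W \<subseteq> {1..n}" and opt: "\<And>T'. T' \<in> I \<Longrightarrow> sum phi T' \<le> sum phi W"
    using E subT by auto
  have AsBs: "insert x (insert y C) \<inter> Bs = C" using xyBs unfolding Bs_def by auto
  have "sum phi (insert x (insert y C)) = 7 * card C + wx + wy"
    using sumT[OF subT[OF AI]] AsBs by simp
  then have geq: "7 * card C + wx + wy \<le> sum phi W" using opt[OF AI] by simp
  have sW: "sum phi W = 7 * card (W \<inter> Bs) + (if x \<in> W then wx else 0) + (if y \<in> W then wy else 0)"
    by (rule sumT[OF Wn])
  have c1: "real (card (W \<inter> Bs)) \<le> real (card C) + 1" using cardTB[of W] by simp
  have xW: "x \<in> W"
  proof (rule ccontr)
    assume nx: "x \<notin> W"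
    show False
    proof (cases "y \<in> W")
      case True
      then have "real (card (W \<inter> Bs)) \<le> real (card C)" using yT[OF WI] by simp
      then show False using geq sW nx True wxy by simp
    next
      case False
      then show False using geq sW nx c1 wxy by simp
    qed
  qed
  have yW: "y \<in> W"
  proof (rule ccontr)
    assume ny: "y \<notin> W"
    have "real (card (W \<inter> Bs)) \<le> real (card C)" using xT[OF WI xW] by simp
    then show False using geq sW ny xW wxy by simp
  qed
  show ?thesis using xW yW xT[OF WI xW] unfolding W_def by simp
qed


lemma bax: "ba x = 8" and bay: "ba y = 8" unfolding ba_def GG_def by auto

lemma baG: "i \<in> GG \<Longrightarrow> ba i = cc i" unfolding ba_def by simp

lemma pay_green:
  assumes iG: "i \<in> GG" and bi: "bb i = cc i"
  shows "myer_payment I FF tb S bb i = (if i \<in> myer_winners I FF tb S bb then cc i else 0)"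
proof (cases "i \<in> myer_winners I FF tb S bb")
  case True
  have u: "bb(i := cc i) = bb" using bi by auto
  have "{z \<in> dist_support (FF i). i \<in> myer_winners I FF tb S (bb(i := z))} = {cc i}"
    using True u by (auto simp: FF_G[OF iG] supp_pm)
  then show ?thesis using True by (simp add: myer_payment_def)
qed (simp add: myer_payment_def)

lemma pay_red:
  assumes i: "i = x \<or> i = y"
  shows "myer_payment I FF tb {1..n} ba i \<le> 3"
proof (cases "i \<in> myer_winners I FF tb {1..n} ba")
  case True
  let ?S = "{z \<in> dist_support (FF i). i \<in> myer_winners I FF tb {1..n} (ba(i := z))}"
  have Fi: "FF i = D2" using i FF_x FF_y by auto
  have xG: "x \<notin> GG" "y \<notin> GG" unfolding GG_def by auto
  have w: "i \<in> myer_winners I FF tb {1..n} (ba(i := 3))"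
  proof (cases "i = x")
    case True
    have "x \<in> myer_winners I FF tb {1..n} (ba(x := 3))"
      using all_winners[of "ba(x := 3)"] xy bay baG xG by auto
    then show ?thesis using True by simp
  next
    case False
    then have iy: "i = y" using i by simp
    have "y \<in> myer_winners I FF tb {1..n} (ba(y := 3))"
      using all_winners[of "ba(y := 3)"] xy bax baG xG by auto
    then show ?thesis using iy by simp
  qed
  have in3: "3 \<in> ?S" using w supp_D2_pos Fi by simp
  have bdd: "bdd_below ?S" using supp_D2_sub Fi by (intro bdd_belowI[of _ 0]) auto
  have "Inf ?S \<le> 3" by (rule cInf_lower[OF in3 bdd])
  then show ?thesis using True by (simp add: myer_payment_def)
qed (simp add: myer_payment_def)

lemma finGG: "finite GG" unfolding GG_def by simp

lemma rev_all: "myer_rev I FF tb {1..n} ba \<le> 7 * card C + 6"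
proof -
  define Wa where "Wa = myer_winners I FF tb {1..n} ba"
  have split: "{1..n} = GG \<union> {x, y}" "GG \<inter> {x, y} = {}" using rng unfolding GG_def by auto
  have "myer_rev I FF tb {1..n} ba = (\<Sum>i\<in>GG. myer_payment I FF tb {1..n} ba i) +
          (\<Sum>i\<in>{x,y}. myer_payment I FF tb {1..n} ba i)"
    unfolding myer_rev_def split(1) by (rule sum.union_disjoint[OF finGG _ split(2)]) simp
  also have "(\<Sum>i\<in>{x,y}. myer_payment I FF tb {1..n} ba i) \<le> 6"
    using xy pay_red[of x] pay_red[of y] by simp
  also have "(\<Sum>i\<in>GG. myer_payment I FF tb {1..n} ba i) = (\<Sum>i\<in>GG. if i \<in> Wa \<inter> Bs then 7 else 0)"
    by (intro sum.cong refl) (simp add: pay_green baG Wa_def cc_def)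
  also have "\<dots> = 7 * card (GG \<inter> (Wa \<inter> Bs))" by (rule sum_ind[OF finGG])
  also have "\<dots> \<le> 7 * card C"
  proof -
    have "card (GG \<inter> (Wa \<inter> Bs)) \<le> card (Wa \<inter> Bs)" by (rule card_mono) (use rng in auto)
    also have "\<dots> \<le> card C" using all_winners[of ba] bax bay baG unfolding Wa_def by simp
    finally show ?thesis by simp
  qed
  finally show ?thesis by simp
qed

lemma rev_green: "myer_rev I FF tb GG (restrict cc GG) = 7 * real (card Bs)"
proof -
  define bg where "bg = restrict cc GG"
  define Wg where "Wg = myer_winners I FF tb GG bg"
  define phi where "phi = (\<lambda>i. virtual_value (FF i) (bg i))"
  have phiG: "phi i = cc i" if "i \<in> GG" for i
    using that vv_pm[OF cc_nn] by (simp add: phi_def FF_G bg_def)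
  have E: "{i\<in>GG. 0 \<le> phi i} = GG" using phiG cc_nn by auto
  have sumT: "sum phi T = 7 * card (T \<inter> Bs)" if "T \<subseteq> GG" for T
  proof -
    have fT: "finite T" using that finGG finite_subset by blast
    have "sum phi T = (\<Sum>i\<in>T. if i \<in> Bs then 7 else 0)"
      using that phiG by (intro sum.cong) (auto simp: cc_def)
    then show ?thesis using sum_ind[OF fT] by simp
  qed
  have wc: "Wg \<in> I \<and> Wg \<subseteq> {i\<in>GG. 0 \<le> phi i} \<and>
     (\<forall>T'\<in>I. T' \<subseteq> {i\<in>GG. 0 \<le> phi i} \<longrightarrow> sum phi T' \<le> sum phi Wg)"
    using winners_char[OF tbP finI Ipow(2), of FF GG bg] unfolding Wg_def phi_def by simp
  then have WgG: "Wg \<subseteq> GG" and opt: "sum phi Bs \<le> sum phi Wg" using E BsG BI unfolding Bs_def by auto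
  have "7 * real (card Bs) \<le> 7 * real (card (Wg \<inter> Bs))"
    using opt sumT[OF BsG] sumT[OF WgG] by simp
  then have "card Bs \<le> card (Wg \<inter> Bs)" by simp
  then have WB: "Wg \<inter> Bs = Bs" by (intro card_seteq rng(5)) auto
  have "myer_rev I FF tb GG bg = (\<Sum>i\<in>GG. if i \<in> Wg \<inter> Bs then 7 else 0)"
    unfolding myer_rev_def by (intro sum.cong refl) (simp add: pay_green bg_def Wg_def cc_def)
  also have "\<dots> = 7 * card (GG \<inter> (Wg \<inter> Bs))" by (rule sum_ind[OF finGG])
  also have "GG \<inter> (Wg \<inter> Bs) = Bs" using WB BsG by auto
  finally have "myer_rev I FF tb GG bg = 7 * real (card Bs)" by simp
  then show ?thesis unfolding bg_def .
qed

end

theorem mainTheorem2: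
  fixes n :: nat and I :: "nat set set" and tb :: "nat set set \<Rightarrow> nat set"
  assumes "downward_closed {1..n} I"
    and "\<not> is_matroid {1..n} I"
    and "\<forall>X. X \<noteq> {} \<longrightarrow> tb X \<in> X"
  shows "\<exists>F G R bR.
           (\<forall>i\<in>{1..n}. valid_dist (F i)) \<and>
           G \<union> R = {1..n} \<and> G \<inter> R = {} \<and> G \<noteq> {} \<and>
           (\<forall>i\<in>R. bR i \<in> dist_support (F i)) \<and>
           exp_rev_all n I F tb G bR < exp_rev_green I F tb G"
proof -
  obtain C b x y where st: "b \<notin> C" "x \<notin> insert b C" "y \<notin> insert b C" "x \<noteq> y"
        "insert b C \<in> I" "insert x (insert y C) \<in> I"
        "insert x (insert b C) \<notin> I" "insert y (insert b C) \<notin> I"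
    using nonmatroid_struct[OF assms(1,2)] by blast
  interpret S: nmloc n I tb C b x y
    using assms(1,3) st by unfold_locales
  have valid: "\<forall>i\<in>{1..n}. valid_dist (S.FF i)"
    unfolding S.FF_def using valid_D2 valid_pm[OF S.cc_nn] by auto
  have un: "S.GG \<union> {x, y} = {1..n}" using S.rng unfolding S.GG_def by auto
  have dj: "S.GG \<inter> {x, y} = {}" unfolding S.GG_def by auto
  have ne: "S.GG \<noteq> {}" using S.BsG unfolding S.Bs_def by auto
  have sup: "\<forall>i\<in>{x, y}. (\<lambda>_. 8::real) i \<in> dist_support (S.FF i)"
    using supp_D2_pos S.FF_x S.FF_y by auto
  have eq1: "(\<lambda>i. if i \<in> S.GG then restrict S.cc S.GG i else 8) = S.ba"
    unfolding S.ba_def by auto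
  have all: "exp_rev_all n I S.FF tb S.GG (\<lambda>_. 8) = ennreal (myer_rev I S.FF tb {1..n} S.ba)"
    unfolding exp_rev_all_def
    by (subst int_point[OF S.finGG S.FF_G]) (simp_all add: eq1)
  have green: "exp_rev_green I S.FF tb S.GG = ennreal (myer_rev I S.FF tb S.GG (restrict S.cc S.GG))"
    unfolding exp_rev_green_def
    by (subst int_point[OF S.finGG S.FF_G]) simp_all
  have lt: "myer_rev I S.FF tb {1..n} S.ba < myer_rev I S.FF tb S.GG (restrict S.cc S.GG)"
    using S.rev_all S.rev_green S.cardBs by simp
  have pos: "0 < myer_rev I S.FF tb S.GG (restrict S.cc S.GG)"
    using S.rev_green S.cardBs by simp
  have less: "exp_rev_all n I S.FF tb S.GG (\<lambda>_. 8) < exp_rev_green I S.FF tb S.GG"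
    unfolding all green by (rule ennreal_lessI[OF pos lt])
  show ?thesis
    apply (rule exI[of _ S.FF], rule exI[of _ S.GG], rule exI[of _ "{x,y}"], rule exI[of _ "\<lambda>_. 8::real"])
    apply (intro conjI)
         apply (rule valid)
        apply (rule un)
       apply (rule dj)
      apply (rule ne)
     apply (rule sup)
    apply (rule less)
    done
qed

end
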